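(* Let $X$ be a Hausdorff complex topological vector space with $\dim X>1$. Let $\Gamma\subset\mathcal{B}(X)$ have the property that for all $T,S\in\Gamma$ with $T\neq S$ there exists $A\in\Gamma$ such that $T=AS$. If $\Gamma$ is supercyclic, then $\Gamma$ is supercyclic transitive.
   Context: $\mathcal{B}(X)$ denotes the space of continuous linear operators on $X$. For $\Gamma\subset\mathcal{B}(X)$ and $x\in X$, put $\mathbb{C}\,Orb(\Gamma,x)=\{\alpha Tx:\alpha\in\mathbb{C},\,T\in\Gamma\}$. The set $\Gamma$ is called supercyclic if there exists $x\in X$ such that $\mathbb{C}\,Orb(\Gamma,x)$ is dense in $X$. A set $\Gamma\subset\mathcal{B}(X)$ is called supercyclic transitive if, for each pair $(U,V)$ of nonempty open subsets of $X$, there exist $\alpha\in\mathbb{C}\setminus\{0\}$ and $T\in\Gamma$ such that $T(\alpha U)\cap V\neq\emptyset$. *)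

theory Defs
  imports "HOL-Analysis.Analysis"
begin

text \<open>A complex topological vector space: the carrier type 'a carries a topology
  (Hausdorffness is imposed via the class t2_space in the theorem) and an additive
  group structure; scal is the complex scalar multiplication.\<close>
definition complex_tvs :: "(complex \<Rightarrow> 'a::{ab_group_add, topological_space} \<Rightarrow> 'a) \<Rightarrow> bool" where
  "complex_tvs scal \<longleftrightarrow>
     vector_space scal \<and>
     continuous_on UNIV (\<lambda>p::'a \<times> 'a. fst p + snd p) \<and>
     continuous_on UNIV (\<lambda>p::complex \<times> 'a. scal (fst p) (snd p))"

text \<open>dim X > 1, i.e. X is not spanned by a single vector (this also covers the
  infinite-dimensional case, where the library's dim returns 0).\<close>
definition dim_gt_one :: "(complex \<Rightarrow> 'a::ab_group_add \<Rightarrow> 'a) \<Rightarrow> bool" where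
  "dim_gt_one scal \<longleftrightarrow> (\<forall>v. module.span scal {v} \<noteq> UNIV)"

definition cont_ops :: "(complex \<Rightarrow> 'a::{ab_group_add, topological_space} \<Rightarrow> 'a) \<Rightarrow> ('a \<Rightarrow> 'a) set" where
  "cont_ops scal = {T. Vector_Spaces.linear scal scal T \<and> continuous_on UNIV T}"

definition C_orb :: "(complex \<Rightarrow> 'a \<Rightarrow> 'a) \<Rightarrow> ('a \<Rightarrow> 'a) set \<Rightarrow> 'a \<Rightarrow> 'a set" where
  "C_orb scal \<Gamma> x = {scal \<alpha> (T x) | \<alpha> T. T \<in> \<Gamma>}"

definition supercyclic :: "(complex \<Rightarrow> 'a::topological_space \<Rightarrow> 'a) \<Rightarrow> ('a \<Rightarrow> 'a) set \<Rightarrow> bool" where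
  "supercyclic scal \<Gamma> \<longleftrightarrow> (\<exists>x. closure (C_orb scal \<Gamma> x) = UNIV)"

definition supercyclic_transitive :: "(complex \<Rightarrow> 'a::topological_space \<Rightarrow> 'a) \<Rightarrow> ('a \<Rightarrow> 'a) set \<Rightarrow> bool" where
  "supercyclic_transitive scal \<Gamma> \<longleftrightarrow>
     (\<forall>U V. open U \<and> U \<noteq> {} \<and> open V \<and> V \<noteq> {} \<longrightarrow>
        (\<exists>\<alpha> T. \<alpha> \<noteq> 0 \<and> T \<in> \<Gamma> \<and> T ` (scal \<alpha> ` U) \<inter> V \<noteq> {}))"

end

theory Submission
  imports Defs
begin

lemma open_vimage_UNIV:
  assumes "continuous_on UNIV f" "open B" shows "open (f -` B)"
  using assms continuous_on_open_vimage[of UNIV f] by auto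

lemma tvs_module: "complex_tvs scal \<Longrightarrow> module scal"
  unfolding complex_tvs_def vector_space_def by (auto intro: module.intro)

lemma tvs_cont_scal:
  assumes "complex_tvs scal"
  shows "continuous_on UNIV (\<lambda>t. scal t v)"
proof -
  have c: "continuous_on UNIV (\<lambda>p::complex \<times> 'a. scal (fst p) (snd p))"
    using assms unfolding complex_tvs_def by auto
  have "continuous_on UNIV (\<lambda>t. (\<lambda>p::complex \<times> 'a. scal (fst p) (snd p)) ((\<lambda>t. (t, v)) t))"
    by (rule continuous_on_compose2[OF c]) (auto intro!: continuous_intros)
  then show ?thesis by simp
qed

lemma tvs_cont_affine:
  assumes "complex_tvs scal"
  shows "continuous_on UNIV (\<lambda>t. w + scal t v)"
proof -
  have c: "continuous_on UNIV (\<lambda>p::'a \<times> 'a. fst p + snd p)"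
    using assms unfolding complex_tvs_def by auto
  have "continuous_on UNIV (\<lambda>t. (\<lambda>p::'a \<times> 'a. fst p + snd p) ((\<lambda>t. (w, scal t v)) t))"
    by (rule continuous_on_compose2[OF c])
      (auto intro!: continuous_intros tvs_cont_scal[OF assms])
  then show ?thesis by simp
qed

lemma closed_line:
  fixes scal :: "complex \<Rightarrow> 'a::{ab_group_add, t2_space} \<Rightarrow> 'a"
  assumes tvs: "complex_tvs scal"
  shows "closed (range (\<lambda>c. scal c v))"
proof (cases "v = 0")
  case True
  interpret module scal using tvs_module[OF tvs] .
  have "range (\<lambda>c. scal c v) = {0}" using True by auto
  then show ?thesis by simp
next
  case False
  interpret module scal using tvs_module[OF tvs] .
  let ?L = "range (\<lambda>c. scal c v)"
  have "closure ?L \<subseteq> ?L"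
  proof
    fix y assume y: "y \<in> closure ?L"
    obtain W where W: "open W" "0 \<in> W" "v \<notin> W"
      using t1_space[of 0 v] False by auto
    let ?f = "\<lambda>p::complex \<times> 'a. scal (fst p) (snd p)"
    have c: "continuous_on UNIV ?f" using tvs unfolding complex_tvs_def by auto
    have "open (?f -` W)" by (rule open_vimage_UNIV[OF c W(1)])
    moreover have "(0, y) \<in> ?f -` W" using W by simp
    ultimately obtain A B where AB: "open A" "open B" "(0,y) \<in> A \<times> B" "A \<times> B \<subseteq> ?f -` W"
      by (rule open_prod_elim)
    obtain d where d: "d > 0" "ball 0 d \<subseteq> A"
      using AB(1,3) open_contains_ball by blast
    let ?K = "(\<lambda>c. scal c v) ` cball 0 (1/d)"
    have "compact ?K"
      by (rule compact_continuous_image)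
        (auto intro: continuous_on_subset[OF tvs_cont_scal[OF tvs]])
    then have clK: "closed ?K" by (rule compact_imp_closed)
    have "B \<inter> ?L \<subseteq> ?K"
    proof
      fix z assume z: "z \<in> B \<inter> ?L"
      then obtain c where c: "z = scal c v" by auto
      have "norm c \<le> 1/d"
      proof (rule ccontr)
        assume "\<not> norm c \<le> 1/d"
        then have nc: "norm c > 1/d" by simp
        then have c0: "c \<noteq> 0" using d by (auto simp: field_simps)
        have "norm (inverse c) < d"
          using nc d by (simp add: norm_divide divide_simps mult.commute)
        then have "inverse c \<in> A" using d by auto
        then have "(inverse c, z) \<in> A \<times> B" using z by auto
        then have "scal (inverse c) z \<in> W" using AB(4) by auto
        moreover have "scal (inverse c) z = v" using c c0 by simp
        ultimately show False using W by simp
      qed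
      then show "z \<in> ?K" using c by auto
    qed
    have "y \<in> B \<inter> closure ?L" using y AB(3) by auto
    also have "\<dots> \<subseteq> closure (B \<inter> ?L)" by (rule open_Int_closure_subset[OF AB(2)])
    also have "\<dots> \<subseteq> closure ?K" by (rule closure_mono) fact
    also have "\<dots> = ?K" using clK by simp
    also have "\<dots> \<subseteq> ?L" by auto
    finally show "y \<in> ?L" .
  qed
  then show ?thesis using closure_subset_eq by blast
qed

lemma open_not_in_line:
  fixes scal :: "complex \<Rightarrow> 'a::{ab_group_add, t2_space} \<Rightarrow> 'a"
  assumes tvs: "complex_tvs scal" and dim: "dim_gt_one scal"
    and W: "open W" "W \<noteq> {}"
  shows "\<not> W \<subseteq> range (\<lambda>c. scal c v)"
proof
  assume sub: "W \<subseteq> range (\<lambda>c. scal c v)"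
  interpret module scal using tvs_module[OF tvs] .
  obtain y where y: "y \<notin> range (\<lambda>c. scal c v)"
    using dim unfolding dim_gt_one_def by (auto simp: span_singleton)
  obtain w where w: "w \<in> W" using W by auto
  then obtain c0 where c0: "w = scal c0 v" using sub by auto
  let ?g = "\<lambda>t. w + scal t y"
  have "open (?g -` W)" by (rule open_vimage_UNIV[OF tvs_cont_affine[OF tvs] W(1)])
  moreover have "0 \<in> ?g -` W" using w by simp
  ultimately obtain e where e: "e > 0" "ball 0 e \<subseteq> ?g -` W"
    using open_contains_ball by blast
  let ?t = "complex_of_real (e/2)"
  have t0: "?t \<noteq> 0" using e by simp
  have "?t \<in> ball 0 e" using e by simp
  then have "?g ?t \<in> W" using e by blast
  then obtain c1 where c1: "w + scal ?t y = scal c1 v" using sub by blast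
  have "scal ?t y = scal (c1 - c0) v"
    using c1 c0 by (simp add: scale_left_diff_distrib algebra_simps)
  then have "scal (inverse ?t) (scal ?t y) = scal (inverse ?t * (c1 - c0)) v" by simp
  then have "y = scal (inverse ?t * (c1 - c0)) v" using t0 by simp
  then show False using y by auto
qed

theorem theorem3p8:
  fixes scal :: "complex \<Rightarrow> 'a::{ab_group_add, t2_space} \<Rightarrow> 'a"
    and \<Gamma> :: "('a \<Rightarrow> 'a) set"
  assumes "complex_tvs scal"
    and "dim_gt_one scal"
    and "\<Gamma> \<subseteq> cont_ops scal"
    and "\<forall>T\<in>\<Gamma>. \<forall>S\<in>\<Gamma>. T \<noteq> S \<longrightarrow> (\<exists>A\<in>\<Gamma>. T = A \<circ> S)"
    and "supercyclic scal \<Gamma>"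
  shows "supercyclic_transitive scal \<Gamma>"
  unfolding supercyclic_transitive_def
proof (intro allI impI)
  fix U V :: "'a set"
  assume UV: "open U \<and> U \<noteq> {} \<and> open V \<and> V \<noteq> {}"
  note tvs = assms(1) and dim = assms(2)
  interpret module scal using tvs_module[OF tvs] .
  obtain x where x: "closure (C_orb scal \<Gamma> x) = UNIV"
    using assms(5) unfolding supercyclic_def by auto
  have meet: "S' \<inter> C_orb scal \<Gamma> x \<noteq> {}" if "open S'" "S' \<noteq> {}" for S'
    using open_Int_closure_eq_empty[OF that(1), of "C_orb scal \<Gamma> x"] x that by auto
  let ?L0 = "range (\<lambda>c. scal c (0::'a))"
  have "open (V - ?L0)" using UV closed_line[OF tvs] by (intro open_Diff) auto
  moreover have "V - ?L0 \<noteq> {}" using open_not_in_line[OF tvs dim, of V 0] UV by auto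
  ultimately obtain \<beta> T where T: "T \<in> \<Gamma>" "scal \<beta> (T x) \<in> V" "scal \<beta> (T x) \<notin> ?L0"
    using meet[of "V - ?L0"] unfolding C_orb_def by auto
  have b0: "\<beta> \<noteq> 0" using T(3) by auto
  let ?L = "range (\<lambda>c. scal c (T x))"
  have "open (U - ?L)" using UV closed_line[OF tvs] by (intro open_Diff) auto
  moreover have "U - ?L \<noteq> {}" using open_not_in_line[OF tvs dim, of U "T x"] UV by auto
  ultimately obtain \<alpha> S where S: "S \<in> \<Gamma>" "scal \<alpha> (S x) \<in> U" "scal \<alpha> (S x) \<notin> ?L"
    using meet[of "U - ?L"] unfolding C_orb_def by auto
  have a0: "\<alpha> \<noteq> 0"
  proof
    assume "\<alpha> = 0"
    then have "scal \<alpha> (S x) = scal 0 (T x)" by simp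
    then show False using S(3) by blast
  qed
  have "S \<noteq> T" using S(3) by auto
  then obtain A where A: "A \<in> \<Gamma>" "T = A \<circ> S" using assms(4) S(1) T(1) by metis
  have lin: "Vector_Spaces.linear scal scal A" using A(1) assms(3) unfolding cont_ops_def by auto
  have "A (scal (\<beta> / \<alpha>) (scal \<alpha> (S x))) = A (scal \<beta> (S x))"
    using a0 by simp
  also have "\<dots> = scal \<beta> (A (S x))" using module_hom.scale[OF lin[unfolded linear_iff_module_hom]] by simp
  also have "\<dots> = scal \<beta> (T x)" using A(2) by simp
  finally have "A (scal (\<beta> / \<alpha>) (scal \<alpha> (S x))) \<in> V" using T(2) by simp
  then have "A ` (scal (\<beta> / \<alpha>) ` U) \<inter> V \<noteq> {}" using S(2) by blast
  moreover have "\<beta> / \<alpha> \<noteq> 0" using a0 b0 by simp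
  ultimately show "\<exists>\<alpha> T. \<alpha> \<noteq> 0 \<and> T \<in> \<Gamma> \<and> T ` (scal \<alpha> ` U) \<inter> V \<noteq> {}"
    using A(1) by blast
qed

end
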